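(* Let $L$ be a finite lattice and $C$ a nonempty convex subset of $L$. Then every maximal chain of $L$ that does not intersect $C$ contains an element that is neither below all maximal elements of $C$ nor above all minimal elements of $C$.
   Context: A subset $C$ of $L$ is convex if $x,y\in C$ implies $[x,y]\subseteq C$. A maximal chain is a totally ordered subset to which no element can be added while remaining a chain. *)

theory Defs
  imports Main
begin

definition convex_set :: "'a::order set \<Rightarrow> bool" where
  "convex_set C \<longleftrightarrow> (\<forall>x\<in>C. \<forall>y\<in>C. {x..y} \<subseteq> C)"

definition maximal_chain :: "'a::order set \<Rightarrow> bool" where
  "maximal_chain M \<longleftrightarrow> Complete_Partial_Order.chain (\<le>) M \<and>
     (\<forall>x. Complete_Partial_Order.chain (\<le>) (insert x M) \<longrightarrow> x \<in> M)"

definition maximal_elems :: "'a::order set \<Rightarrow> 'a set" where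
  "maximal_elems C = {x\<in>C. \<forall>y\<in>C. x \<le> y \<longrightarrow> y = x}"

definition minimal_elems :: "'a::order set \<Rightarrow> 'a set" where
  "minimal_elems C = {x\<in>C. \<forall>y\<in>C. y \<le> x \<longrightarrow> y = x}"

end

theory Submission
  imports Defs
begin

lemma ex_max_above:
  fixes C :: "'a::{finite,order} set"
  assumes "c \<in> C" shows "\<exists>m\<in>maximal_elems C. c \<le> m"
  using finite_has_maximal2[of C c] assms unfolding maximal_elems_def by force

lemma ex_min_below:
  fixes C :: "'a::{finite,order} set"
  assumes "c \<in> C" shows "\<exists>m\<in>minimal_elems C. m \<le> c"
  using finite_has_minimal2[of C c] assms unfolding minimal_elems_def by force

theorem lemma3p17:
  fixes C M :: "'a::{finite,lattice} set"
  assumes "C \<noteq> {}" and "convex_set C"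
    and "maximal_chain M" and "M \<inter> C = {}"
  shows "\<exists>m\<in>M. \<not> (\<forall>c\<in>maximal_elems C. m \<le> c) \<and> \<not> (\<forall>c\<in>minimal_elems C. c \<le> m)"
proof (rule ccontr)
  assume H: "\<not> ?thesis"
  define A where "A = {m\<in>M. \<forall>c\<in>maximal_elems C. m \<le> c}"
  define B where "B = {m\<in>M. \<forall>c\<in>minimal_elems C. c \<le> m}"
  have AB: "\<And>m. m \<in> M \<Longrightarrow> m \<in> A \<or> m \<in> B" using H unfolding A_def B_def by blast
  have ch: "\<And>x y. x \<in> M \<Longrightarrow> y \<in> M \<Longrightarrow> x \<le> y \<or> y \<le> x"
    using assms(3) unfolding maximal_chain_def Complete_Partial_Order.chain_def by blast
  have mx: "\<And>x. (\<And>m. m \<in> M \<Longrightarrow> m \<le> x \<or> x \<le> m) \<Longrightarrow> x \<in> M"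
  proof -
    fix x assume "\<And>m. m \<in> M \<Longrightarrow> m \<le> x \<or> x \<le> m"
    then have "Complete_Partial_Order.chain (\<le>) (insert x M)"
      using ch unfolding Complete_Partial_Order.chain_def by blast
    then show "x \<in> M" using assms(3) unfolding maximal_chain_def by blast
  qed
  obtain c1 where c1: "c1 \<in> C" using assms(1) by blast
  obtain cmin where cmin: "cmin \<in> minimal_elems C" using ex_min_below[OF c1] by blast
  have cminC: "cmin \<in> C" using cmin unfolding minimal_elems_def by blast
  have Mne: "M \<noteq> {}"
  proof
    assume "M = {}" then show False using mx[of cmin] assms(4) cminC by blast
  qed
  show False
  proof (cases "A = {}")
    case True
    obtain m1 where m1: "m1 \<in> M" using Mne by blast
    obtain m0 where m0: "m0 \<in> M" "\<forall>b\<in>M. b \<le> m0 \<longrightarrow> m0 = b"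
      using finite_has_minimal2[OF finite m1] by blast
    have least: "\<And>m. m \<in> M \<Longrightarrow> m0 \<le> m" using m0 ch by blast
    have "m0 \<in> B" using AB[OF m0(1)] True by blast
    then have "cmin \<le> m0" using cmin unfolding B_def by blast
    then have "cmin \<in> M" using mx[of cmin] least order_trans by blast
    then show False using assms(4) cminC by blast
  next
    case False
    then obtain a1 where a1: "a1 \<in> A" by blast
    have fA: "finite A" by simp
    obtain a where a: "a \<in> A" "\<forall>b\<in>A. a \<le> b \<longrightarrow> a = b"
      using finite_has_maximal2[OF fA a1] by blast
    have aM: "a \<in> M" using a(1) unfolding A_def by blast
    have great: "\<And>m. m \<in> A \<Longrightarrow> m \<le> a"
      using a ch aM unfolding A_def by blast
    have "a \<notin> B"
    proof
      assume "a \<in> B"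
      then have "cmin \<le> a" using cmin unfolding B_def by blast
      obtain c' where c': "c' \<in> maximal_elems C" "cmin \<le> c'" using ex_max_above[OF cminC] by blast
      have "a \<le> c'" using a(1) c'(1) unfolding A_def by blast
      have "c' \<in> C" using c'(1) unfolding maximal_elems_def by blast
      then have "a \<in> C" using assms(2) cminC \<open>cmin \<le> a\<close> \<open>a \<le> c'\<close>
        unfolding convex_set_def by (meson atLeastAtMost_iff subsetD)
      then show False using aM assms(4) by blast
    qed
    then obtain c0 where c0: "c0 \<in> minimal_elems C" "\<not> c0 \<le> a"
      using aM unfolding B_def by blast
    have c0C: "c0 \<in> C" using c0(1) unfolding minimal_elems_def by blast
    obtain c' where c': "c' \<in> maximal_elems C" "c0 \<le> c'" using ex_max_above[OF c0C] by blast
    have "a \<le> c'" using a(1) c'(1) unfolding A_def by blast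
    have c'C: "c' \<in> C" using c'(1) unfolding maximal_elems_def by blast
    define x where "x = sup a c0"
    have "x \<le> c'" using \<open>a \<le> c'\<close> c'(2) unfolding x_def by simp
    have "c0 \<le> x" unfolding x_def by simp
    have xC: "x \<in> C" using assms(2) c0C c'C \<open>x \<le> c'\<close> \<open>c0 \<le> x\<close>
      unfolding convex_set_def by (meson atLeastAtMost_iff subsetD)
    have "x \<in> M"
    proof (rule mx)
      fix m assume mM: "m \<in> M"
      show "m \<le> x \<or> x \<le> m"
      proof (cases "m \<le> a")
        case True then show ?thesis unfolding x_def using le_supI1 by blast
      next
        case False
        then have "a \<le> m" using ch mM aM by blast
        have "m \<notin> A" using great False by blast
        then have "m \<in> B" using AB mM by blast
        then have "c0 \<le> m" using c0(1) unfolding B_def by blast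
        then show ?thesis using \<open>a \<le> m\<close> unfolding x_def by simp
      qed
    qed
    then show False using xC assms(4) by blast
  qed
qed

end
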